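(* Let $n>2$, let $d\subseteq 2\times(n-2)$ be a Young diagram, and let $d^|=\{s,t\}$ with $1\le s<t\le n$ be its set of vertical steps. For odd integers $0<a<b<2n$ let $I_{a,b}=\{e^{\frac{\pi}{n}ia},e^{\frac{\pi}{n}ib}\}$ (every 2-element subset of the roots of $\zeta^n=-1$ has this form). Then $S_d(I_{a,b})=0$ if and only if $n$ divides $\frac{b-a}{2}(t-s)$.
   Context: A Young diagram $d\subseteq 2\times(n-2)$ has row lengths $n-2\ge d_1\ge d_2\ge0$. Its profile path runs from the top-right corner to the bottom-left corner of the $2\times(n-2)$ rectangle in $n$ unit steps, labelled $1,\dots,n$ in order; $d^|\subset\{1,\dots,n\}$ is the set of labels of the two vertical steps. $S_d(z_1,z_2)=\sum_T z_1^{t_1}z_2^{t_2}$ is the two-variable Schur polynomial, summing over semistandard tableaux $T$ of shape $d$ with entries in $\{1,2\}$ (rows weakly increasing, columns strictly increasing), $t_i$ the number of entries equal to $i$; being symmetric, it can be evaluated on an unordered 2-element set. *)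

theory Defs
  imports Complex_Main
begin

text \<open>A Young diagram d inside the 2 x (n-2) rectangle is given by its row lengths
  d1 (top row) and d2 (bottom row) with n-2 >= d1 >= d2 >= 0.\<close>

definition young_diagram :: "nat \<Rightarrow> nat \<Rightarrow> nat \<Rightarrow> bool" where
  "young_diagram n d1 d2 \<longleftrightarrow> d2 \<le> d1 \<and> d1 \<le> n - 2"

definition cells :: "nat \<Rightarrow> nat \<Rightarrow> (nat \<times> nat) set" where
  "cells d1 d2 = {(i, j). (i = 0 \<and> j < d1) \<or> (i = 1 \<and> j < d2)}"

datatype step = H | V

text \<open>Profile path from the top-right corner to the bottom-left corner of the
  2 x (n-2) rectangle: steps go left (H) or down (V) along the boundary of d.\<close>
definition profile :: "nat \<Rightarrow> nat \<Rightarrow> nat \<Rightarrow> step list" where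
  "profile n d1 d2 = replicate (n - 2 - d1) H @ [V] @ replicate (d1 - d2) H @ [V] @ replicate d2 H"

definition vsteps :: "nat \<Rightarrow> nat \<Rightarrow> nat \<Rightarrow> nat set" where
  "vsteps n d1 d2 = {k. 1 \<le> k \<and> k \<le> length (profile n d1 d2) \<and> profile n d1 d2 ! (k - 1) = V}"

definition ssyt :: "nat \<Rightarrow> nat \<Rightarrow> (nat \<Rightarrow> nat \<Rightarrow> nat) set" where
  "ssyt d1 d2 = {T. (\<forall>i j. (i, j) \<notin> cells d1 d2 \<longrightarrow> T i j = 0)
      \<and> (\<forall>(i, j) \<in> cells d1 d2. T i j \<in> {1, 2})
      \<and> (\<forall>i j j'. (i, j) \<in> cells d1 d2 \<and> (i, j') \<in> cells d1 d2 \<and> j \<le> j' \<longrightarrow> T i j \<le> T i j')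
      \<and> (\<forall>j. (1, j) \<in> cells d1 d2 \<longrightarrow> T 0 j < T 1 j)}"

definition tcount :: "nat \<Rightarrow> nat \<Rightarrow> (nat \<Rightarrow> nat \<Rightarrow> nat) \<Rightarrow> nat \<Rightarrow> nat" where
  "tcount d1 d2 T v = card {(i, j) \<in> cells d1 d2. T i j = v}"

definition schur :: "nat \<Rightarrow> nat \<Rightarrow> complex \<Rightarrow> complex \<Rightarrow> complex" where
  "schur d1 d2 z1 z2 = (\<Sum>T\<in>ssyt d1 d2. z1 ^ tcount d1 d2 T 1 * z2 ^ tcount d1 d2 T 2)"

definition zroot :: "nat \<Rightarrow> nat \<Rightarrow> complex" where
  "zroot n a = exp (complex_of_real (pi * real a / real n) * \<i>)"

end

theory Submission imports Defs "HOL-Analysis.Analysis" begin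

lemma prof_nth:
  assumes "i < p + m + q + 2"
  shows "(replicate p H @ [V] @ replicate m H @ [V] @ replicate q H) ! i = V \<longleftrightarrow> i = p \<or> i = p + m + 1"
proof -
  consider "i < p" | "i = p" | "p < i" "i < p + m + 1" | "i = p + m + 1" | "p + m + 1 < i" by linarith
  then show ?thesis
  proof cases
    case 1 then show ?thesis by (simp add: nth_append)
  next
    case 2 then show ?thesis by (simp add: nth_append)
  next
    case 3
    then have "(replicate p H @ [V] @ replicate m H @ [V] @ replicate q H) ! i = (replicate m H @ [V] @ replicate q H) ! (i - p - 1)"
      by (simp add: nth_append)
    also have "\<dots> = H" using 3 by (simp add: nth_append)
    finally show ?thesis using 3 by simp
  next
    case 4
    then have "(replicate p H @ [V] @ replicate m H @ [V] @ replicate q H) ! i = (replicate m H @ [V] @ replicate q H) ! (m)"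
      by (simp add: nth_append)
    also have "\<dots> = V" by (simp add: nth_append)
    finally show ?thesis using 4 by simp
  next
    case 5
    then have "(replicate p H @ [V] @ replicate m H @ [V] @ replicate q H) ! i = (replicate m H @ [V] @ replicate q H) ! (i - p - 1)"
      by (simp add: nth_append)
    also have "\<dots> = replicate q H ! (i - p - m - 2)" using 5 by (simp add: nth_append)
    also have "\<dots> = H" using 5 assms by simp
    finally show ?thesis using 5 by simp
  qed
qed

lemma vsteps_eq:
  assumes "young_diagram n d1 d2" "n > 2"
  shows "vsteps n d1 d2 = {n - 1 - d1, n - d2}"
proof -
  define p where "p = n - 2 - d1"
  define m where "m = d1 - d2"
  have pr: "profile n d1 d2 = replicate p H @ [V] @ replicate m H @ [V] @ replicate d2 H"
    unfolding profile_def p_def m_def by simp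
  have len: "length (profile n d1 d2) = p + m + d2 + 2" unfolding pr by simp
  have P: "\<And>k. k < p + m + d2 + 2 \<Longrightarrow> profile n d1 d2 ! k = V \<longleftrightarrow> k = p \<or> k = p + m + 1"
    unfolding pr by (rule prof_nth)
  have "vsteps n d1 d2 = {p + 1, p + m + 2}"
  proof (rule set_eqI)
    fix k
    show "k \<in> vsteps n d1 d2 \<longleftrightarrow> k \<in> {p + 1, p + m + 2}"
    proof
      assume "k \<in> vsteps n d1 d2"
      then have k: "1 \<le> k" "k \<le> p + m + d2 + 2" "profile n d1 d2 ! (k - 1) = V"
        unfolding vsteps_def len by auto
      have "k - 1 < p + m + d2 + 2" using k by linarith
      then have "k - 1 = p \<or> k - 1 = p + m + 1" using P k(3) by blast
      then show "k \<in> {p + 1, p + m + 2}" using k(1) by auto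
    next
      assume k: "k \<in> {p + 1, p + m + 2}"
      then have "k - 1 < p + m + d2 + 2" "k - 1 = p \<or> k - 1 = p + m + 1" by auto
      then have "profile n d1 d2 ! (k - 1) = V" using P by blast
      then show "k \<in> vsteps n d1 d2" unfolding vsteps_def len using k by auto
    qed
  qed
  moreover have "p + 1 = n - 1 - d1" "p + m + 2 = n - d2"
    using assms unfolding p_def m_def young_diagram_def by auto
  ultimately show ?thesis by simp
qed

definition Tk :: "nat \<Rightarrow> nat \<Rightarrow> nat \<Rightarrow> nat \<Rightarrow> nat \<Rightarrow> nat" where
  "Tk d1 d2 k i j = (if i = 0 \<and> j < d1 then (if j < d2 + k then 1 else 2) else if i = 1 \<and> j < d2 then 2 else 0)"

lemma Tk_ssyt: "d2 \<le> d1 \<Longrightarrow> k \<le> d1 - d2 \<Longrightarrow> Tk d1 d2 k \<in> ssyt d1 d2"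
  unfolding ssyt_def Tk_def cells_def by auto

lemma Tk_inj: "inj_on (Tk d1 d2) {..d1 - d2}"
proof
  fix k l assume k: "k \<in> {..d1 - d2}" and l: "l \<in> {..d1 - d2}" and e: "Tk d1 d2 k = Tk d1 d2 l"
  show "k = l"
  proof (rule ccontr)
    assume "k \<noteq> l"
    then consider "k < l" | "l < k" by linarith
    then show False
    proof cases
      case 1
      then have "Tk d1 d2 k 0 (d2 + k) \<noteq> Tk d1 d2 l 0 (d2 + k)" using l unfolding Tk_def by auto
      then show False using e by simp
    next
      case 2
      then have "Tk d1 d2 k 0 (d2 + l) \<noteq> Tk d1 d2 l 0 (d2 + l)" using k unfolding Tk_def by auto
      then show False using e by simp
    qed
  qed
qed

lemma ssyt_Tk:
  assumes "d2 \<le> d1" "T \<in> ssyt d1 d2"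
  shows "T \<in> Tk d1 d2 ` {..d1 - d2}"
proof -
  have out: "\<And>i j. (i, j) \<notin> cells d1 d2 \<Longrightarrow> T i j = 0"
   and vals: "\<And>i j. (i, j) \<in> cells d1 d2 \<Longrightarrow> T i j \<in> {1, 2}"
   and mono: "\<And>i j j'. (i, j) \<in> cells d1 d2 \<Longrightarrow> (i, j') \<in> cells d1 d2 \<Longrightarrow> j \<le> j' \<Longrightarrow> T i j \<le> T i j'"
   and col: "\<And>j. (1, j) \<in> cells d1 d2 \<Longrightarrow> T 0 j < T 1 j"
    using assms(2) unfolding ssyt_def by auto
  define c where "c = (LEAST j. d1 \<le> j \<or> T 0 j = 2)"
  have ex: "d1 \<le> d1 \<or> T 0 d1 = 2" by simp
  have c1: "d1 \<le> c \<or> T 0 c = 2" unfolding c_def by (rule LeastI[of "\<lambda>j. d1 \<le> j \<or> T 0 j = 2" d1, OF ex])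
  have c2: "\<And>j. j < c \<Longrightarrow> \<not> (d1 \<le> j \<or> T 0 j = 2)" unfolding c_def using not_less_Least by blast
  have cle: "c \<le> d1" unfolding c_def by (rule Least_le) simp
  have row1: "\<And>j. j < d2 \<Longrightarrow> T 1 j = 2 \<and> T 0 j = 1"
  proof -
    fix j assume "j < d2"
    then have "(1, j) \<in> cells d1 d2" "(0, j) \<in> cells d1 d2" using assms(1) unfolding cells_def by auto
    then have "T 0 j \<in> {1, 2}" "T 1 j \<in> {1, 2}" "T 0 j < T 1 j" using vals col by auto
    then show "T 1 j = 2 \<and> T 0 j = 1" by auto
  qed
  have "d2 \<le> c"
  proof (rule ccontr)
    assume "\<not> d2 \<le> c"
    then have "c < d2" by simp
    then have "T 0 c = 1" "c < d1" using row1 assms(1) by auto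
    then show False using c1 by simp
  qed
  have row0: "\<And>j. j < d1 \<Longrightarrow> T 0 j = (if j < c then 1 else 2)"
  proof -
    fix j assume j: "j < d1"
    then have cj: "(0, j) \<in> cells d1 d2" unfolding cells_def by auto
    show "T 0 j = (if j < c then 1 else 2)"
    proof (cases "j < c")
      case True then show ?thesis using c2[OF True] vals[OF cj] by auto
    next
      case False
      then have "c < d1" using j by simp
      then have "T 0 c = 2" "(0, c) \<in> cells d1 d2" using c1 unfolding cells_def by auto
      then have "T 0 j \<ge> 2" using mono[OF _ cj] False by fastforce
      then show ?thesis using vals[OF cj] False by auto
    qed
  qed
  have "T = Tk d1 d2 (c - d2)"
  proof (intro ext)
    fix i j
    show "T i j = Tk d1 d2 (c - d2) i j"
    proof (cases "(i, j) \<in> cells d1 d2")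
      case False then show ?thesis using out unfolding Tk_def cells_def by auto
    next
      case True
      then consider "i = 0" "j < d1" | "i = 1" "j < d2" unfolding cells_def by auto
      then show ?thesis
      proof cases
        case 1 then show ?thesis using row0 \<open>d2 \<le> c\<close> unfolding Tk_def by auto
      next
        case 2 then show ?thesis using row1 assms(1) unfolding Tk_def by auto
      qed
    qed
  qed
  moreover have "c - d2 \<in> {..d1 - d2}" using cle by auto
  ultimately show ?thesis by blast
qed

lemma ssyt_eq: "d2 \<le> d1 \<Longrightarrow> ssyt d1 d2 = Tk d1 d2 ` {..d1 - d2}"
  using ssyt_Tk Tk_ssyt by blast

lemma tc1: "d2 \<le> d1 \<Longrightarrow> k \<le> d1 - d2 \<Longrightarrow> tcount d1 d2 (Tk d1 d2 k) 1 = d2 + k"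
proof -
  assume a: "d2 \<le> d1" "k \<le> d1 - d2"
  have "{(i, j) \<in> cells d1 d2. Tk d1 d2 k i j = 1} = {0} \<times> {..<d2 + k}"
    using a unfolding cells_def Tk_def by auto
  then show ?thesis unfolding tcount_def by simp
qed

lemma tc2: "d2 \<le> d1 \<Longrightarrow> k \<le> d1 - d2 \<Longrightarrow> tcount d1 d2 (Tk d1 d2 k) 2 = d2 + (d1 - d2 - k)"
proof -
  assume a: "d2 \<le> d1" "k \<le> d1 - d2"
  have "{(i, j) \<in> cells d1 d2. Tk d1 d2 k i j = 2} = {0} \<times> {d2 + k..<d1} \<union> {1} \<times> {..<d2}"
    using a unfolding cells_def Tk_def by auto
  moreover have "card ({0::nat} \<times> {d2 + k..<d1} \<union> {1} \<times> {..<d2}) = (d1 - (d2 + k)) + d2"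
    by (subst card_Un_disjoint) auto
  ultimately show ?thesis unfolding tcount_def using a by simp
qed

lemma schur_eq:
  assumes "d2 \<le> d1"
  shows "schur d1 d2 x y = (x * y) ^ d2 * (\<Sum>k\<le>d1 - d2. x ^ k * y ^ (d1 - d2 - k))"
proof -
  have "schur d1 d2 x y = (\<Sum>k\<le>d1 - d2. x ^ tcount d1 d2 (Tk d1 d2 k) 1 * y ^ tcount d1 d2 (Tk d1 d2 k) 2)"
    unfolding schur_def ssyt_eq[OF assms] by (subst sum.reindex[OF Tk_inj]) simp
  also have "\<dots> = (\<Sum>k\<le>d1 - d2. (x * y) ^ d2 * (x ^ k * y ^ (d1 - d2 - k)))"
  proof (rule sum.cong[OF refl])
    fix k assume "k \<in> {..d1 - d2}"
    then have k: "k \<le> d1 - d2" by simp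
    have e1: "tcount d1 d2 (Tk d1 d2 k) 1 = d2 + k" using tc1[OF assms k] .
    have e2: "tcount d1 d2 (Tk d1 d2 k) 2 = d2 + (d1 - d2 - k)" using tc2[OF assms k] .
    show "x ^ tcount d1 d2 (Tk d1 d2 k) 1 * y ^ tcount d1 d2 (Tk d1 d2 k) 2 = (x * y) ^ d2 * (x ^ k * y ^ (d1 - d2 - k))"
      unfolding e1 e2 by (simp add: power_add power_mult_distrib mult_ac)
  qed
  finally show ?thesis by (simp add: sum_distrib_left)
qed


lemma zroot_pow: "zroot n a ^ k = exp (complex_of_real (pi * real (a * k) / real n) * \<i>)"
  unfolding zroot_def by (simp add: exp_of_nat_mult[symmetric] mult_ac)

lemma aux: fixes A B c N p :: real assumes "N>0" "p>0" shows "p*A/N = p*B/N + c*p \<longleftrightarrow> A = B + c*N"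
proof -
  have "p*A/N = p*B/N + c*p \<longleftrightarrow> p*A = p*B + c*p*N" using assms by (simp add: field_simps)
  also have "\<dots> \<longleftrightarrow> p*A = p*(B + c*N)" by (simp add: algebra_simps)
  also have "\<dots> \<longleftrightarrow> A = B + c*N" using assms by simp
  finally show ?thesis .
qed

lemma intdvd: fixes A B N :: int shows "(\<exists>j. A = B + 2 * j * N) \<longleftrightarrow> int 2 * N dvd B - A"
proof
  assume "\<exists>j. A = B + 2 * j * N"
  then obtain j where "A = B + 2 * j * N" by blast
  then have "B - A = 2 * N * (- j)" by (simp add: algebra_simps)
  then show "int 2 * N dvd B - A" by simp
next
  assume "int 2 * N dvd B - A"
  then obtain c where "B - A = 2 * N * c" by auto
  then have "A = B + 2 * (- c) * N" by (simp add: algebra_simps)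
  then show "\<exists>j. A = B + 2 * j * N" by blast
qed

lemma icancel: "((A::complex) * \<i> = B * \<i> + C * \<i>) \<longleftrightarrow> A = B + C"
  by (metis distrib_right mult_cancel_right complex_i_not_zero)

lemma zpow_eq:
  assumes "n > 0" "a \<le> b"
  shows "zroot n a ^ k = zroot n b ^ k \<longleftrightarrow> 2 * n dvd (b - a) * k"
proof -
  have "zroot n a ^ k = zroot n b ^ k \<longleftrightarrow>
     (\<exists>j::int. complex_of_real (pi * real (a * k) / real n) * \<i> = complex_of_real (pi * real (b * k) / real n) * \<i> + (of_int (2 * j) * pi) * \<i>)"
    unfolding zroot_pow exp_eq ..
  also have "\<dots> \<longleftrightarrow> (\<exists>j::int. pi * real (a * k) / real n = pi * real (b * k) / real n + of_int (2 * j) * pi)"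
  proof -
    have "\<And>j::int. complex_of_real (pi * real (a * k) / real n) * \<i> = complex_of_real (pi * real (b * k) / real n) * \<i> + (of_int (2 * j) * pi) * \<i>
       \<longleftrightarrow> pi * real (a * k) / real n = pi * real (b * k) / real n + of_int (2 * j) * pi"
      by (simp only: icancel of_real_add[symmetric] of_real_eq_iff)
    then show ?thesis by simp
  qed
  also have "\<dots> \<longleftrightarrow> (\<exists>j::int. real (a * k) = real (b * k) + of_int (2 * j) * real n)"
  proof -
    have "\<And>j::int. pi * real (a * k) / real n = pi * real (b * k) / real n + of_int (2 * j) * pi
       \<longleftrightarrow> real (a * k) = real (b * k) + of_int (2 * j) * real n"
      using aux[of "real n" pi] assms(1) pi_gt_zero by simp
    then show ?thesis by simp
  qed
  also have "\<dots> \<longleftrightarrow> (\<exists>j::int. int (a * k) = int (b * k) + 2 * j * int n)"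
  proof -
    have "\<And>j::int. real (a * k) = real (b * k) + of_int (2 * j) * real n \<longleftrightarrow> int (a * k) = int (b * k) + 2 * j * int n"
    proof -
      fix j :: int
      have "real (a * k) = real (b * k) + of_int (2 * j) * real n \<longleftrightarrow>
            (of_int (int (a * k)) :: real) = of_int (int (b * k) + 2 * j * int n)" by simp
      then show "real (a * k) = real (b * k) + of_int (2 * j) * real n \<longleftrightarrow> int (a * k) = int (b * k) + 2 * j * int n"
        by (simp only: of_int_eq_iff)
    qed
    then show ?thesis by simp
  qed
  also have "\<dots> \<longleftrightarrow> int (2 * n) dvd int ((b - a) * k)"
  proof -
    have e: "int ((b - a) * k) = int (b * k) - int (a * k)" using assms(2) by (simp add: diff_mult_distrib of_nat_diff mult_le_mono1)
    show ?thesis unfolding e using intdvd[of "int (a * k)" "int (b * k)" "int n"] by simp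
  qed
  also have "\<dots> \<longleftrightarrow> 2 * n dvd (b - a) * k" by (rule of_nat_dvd_iff)
  finally show ?thesis .
qed

theorem lemma4p7:
  fixes n d1 d2 s t a b :: nat
  assumes "n > 2"
    and "young_diagram n d1 d2"
    and "vsteps n d1 d2 = {s, t}" and "1 \<le> s" and "s < t" and "t \<le> n"
    and "odd a" and "odd b" and "0 < a" and "a < b" and "b < 2 * n"
  shows "schur d1 d2 (zroot n a) (zroot n b) = 0 \<longleftrightarrow> n dvd ((b - a) div 2) * (t - s)"
proof -
  define m where "m = d1 - d2"
  have d: "d2 \<le> d1" "d1 \<le> n - 2" using assms(2) unfolding young_diagram_def by auto
  have st: "{s, t} = {n - 1 - d1, n - d2}" using vsteps_eq[OF assms(2,1)] assms(3) by simp
  have "n - 1 - d1 < n - d2" using d assms(1) by linarith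
  then have "s = n - 1 - d1" "t = n - d2" using st assms(5) by (auto simp: doubleton_eq_iff)
  then have ts: "t - s = Suc m" unfolding m_def using d assms(1) by linarith
  define x where "x = zroot n a"
  define y where "y = zroot n b"
  define h where "h = (\<Sum>k\<le>m. x ^ k * y ^ (m - k))"
  have x0: "x \<noteq> 0" "y \<noteq> 0" unfolding x_def y_def zroot_def by auto
  have sch: "schur d1 d2 x y = (x * y) ^ d2 * h" unfolding h_def m_def by (rule schur_eq[OF d(1)])
  have xy: "x \<noteq> y"
  proof
    assume "x = y"
    then have "x ^ 1 = y ^ 1" by simp
    then have "2 * n dvd (b - a) * 1" unfolding x_def y_def using zpow_eq[of n a b 1] assms by simp
    then show False using assms(10,11) by (auto dest: dvd_imp_le)
  qed
  have dp: "x ^ Suc m - y ^ Suc m = (x - y) * h" unfolding h_def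
    using diff_power_eq_sum[of x m y] by (simp add: lessThan_Suc_atMost)
  have "schur d1 d2 x y = 0 \<longleftrightarrow> h = 0" using sch x0 by simp
  also have "\<dots> \<longleftrightarrow> x ^ Suc m = y ^ Suc m" using dp xy by auto
  also have "\<dots> \<longleftrightarrow> 2 * n dvd (b - a) * Suc m" unfolding x_def y_def using zpow_eq[of n a b "Suc m"] assms by simp
  also have "\<dots> \<longleftrightarrow> n dvd ((b - a) div 2) * Suc m"
  proof -
    have "even (b - a)" using assms(7,8,10) by simp
    then have "b - a = 2 * ((b - a) div 2)" by simp
    then have "(b - a) * Suc m = 2 * (((b - a) div 2) * Suc m)" by (metis mult.assoc)
    then show ?thesis by (simp only: nat_mult_dvd_cancel_disj) simp
  qed
  finally show ?thesis unfolding x_def y_def ts .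
qed

end
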